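(* Let $D\ge 1$. If a complex number $\alpha$ can be computed by a root computation tree of degree $D$, then the field extension degree $[\mathbf{Q}(\alpha):\mathbf{Q}]$ is $D$-smooth, i.e., it has no prime factor greater than $D$. In particular, if $\alpha$ can be computed by a quadratic computation tree, then $[\mathbf{Q}(\alpha):\mathbf{Q}]$ is a power of two.
   Context: An algebraic computation tree is a rooted tree whose computation nodes compute a value as the sum, difference, product or quotient of integer constants and values computed at ancestor nodes, and whose decision nodes test whether a computed value is greater than zero and branch. A root computation tree additionally allows computing a complex root of a univariate polynomial whose coefficients are integers or previously computed values, and complex conjugation; its degree is the maximum degree of any polynomial used. A quadratic computation tree is an algebraic computation tree additionally allowing square roots and complex conjugation. A value is computed by a tree if it is computed at some node. *)

theory Defs
  imports Complex_Main "HOL-Computational_Algebra.Polynomial"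
begin

text \<open>An operand is either an integer constant or a reference to the value
computed at the i-th computation node (counted from the root) on the path
from the root to the current node, i.e. a value computed at an ancestor.\<close>

datatype operand = Const int | Val nat

datatype instr =
    Add operand operand
  | Sub operand operand
  | Mul operand operand
  | Quot operand operand
  | RootOf "operand list"   \<comment> \<open>a complex root of c0 + c1 x + ... + ck x^k\<close>
  | Conj operand
  | Sqrt operand

datatype ctree =
    Stop
  | Comp instr ctree
  | Dec operand ctree ctree   \<comment> \<open>test value > 0; yes-branch, no-branch\<close>

fun opnd_ok :: "complex list \<Rightarrow> operand \<Rightarrow> bool" where
  "opnd_ok env (Const k) = True"
| "opnd_ok env (Val i) = (i < length env)"

fun opnd_val :: "complex list \<Rightarrow> operand \<Rightarrow> complex" where
  "opnd_val env (Const k) = of_int k"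
| "opnd_val env (Val i) = env ! i"

definition cpos :: "complex \<Rightarrow> bool" where
  "cpos z \<longleftrightarrow> Im z = 0 \<and> Re z > 0"

inductive instr_res :: "nat \<Rightarrow> complex list \<Rightarrow> instr \<Rightarrow> complex \<Rightarrow> bool" where
  add: "opnd_ok env a \<Longrightarrow> opnd_ok env b \<Longrightarrow>
        instr_res D env (Add a b) (opnd_val env a + opnd_val env b)"
| sub: "opnd_ok env a \<Longrightarrow> opnd_ok env b \<Longrightarrow>
        instr_res D env (Sub a b) (opnd_val env a - opnd_val env b)"
| mul: "opnd_ok env a \<Longrightarrow> opnd_ok env b \<Longrightarrow>
        instr_res D env (Mul a b) (opnd_val env a * opnd_val env b)"
| quot: "opnd_ok env a \<Longrightarrow> opnd_ok env b \<Longrightarrow> opnd_val env b \<noteq> 0 \<Longrightarrow>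
        instr_res D env (Quot a b) (opnd_val env a / opnd_val env b)"
| root: "list_all (opnd_ok env) cs \<Longrightarrow>
         Poly (map (opnd_val env) cs) \<noteq> 0 \<Longrightarrow>
         degree (Poly (map (opnd_val env) cs)) \<le> D \<Longrightarrow>
         poly (Poly (map (opnd_val env) cs)) z = 0 \<Longrightarrow>
         instr_res D env (RootOf cs) z"
| conj: "opnd_ok env a \<Longrightarrow> instr_res D env (Conj a) (cnj (opnd_val env a))"
| sqrt: "opnd_ok env a \<Longrightarrow> z ^ 2 = opnd_val env a \<Longrightarrow> instr_res D env (Sqrt a) z"

text \<open>computes D env t z: z is computed at some node of t when t is run with
the ancestor values env.\<close>
inductive computes :: "nat \<Rightarrow> complex list \<Rightarrow> ctree \<Rightarrow> complex \<Rightarrow> bool" where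
  here: "instr_res D env ins z \<Longrightarrow> computes D env (Comp ins t) z"
| below: "instr_res D env ins z \<Longrightarrow> computes D (env @ [z]) t w \<Longrightarrow>
          computes D env (Comp ins t) w"
| dec_yes: "opnd_ok env a \<Longrightarrow> cpos (opnd_val env a) \<Longrightarrow> computes D env t1 w \<Longrightarrow>
            computes D env (Dec a t1 t2) w"
| dec_no: "opnd_ok env a \<Longrightarrow> \<not> cpos (opnd_val env a) \<Longrightarrow> computes D env t2 w \<Longrightarrow>
           computes D env (Dec a t1 t2) w"

fun is_sqrt :: "instr \<Rightarrow> bool" where
  "is_sqrt (Sqrt a) = True" | "is_sqrt _ = False"

fun is_root :: "instr \<Rightarrow> bool" where
  "is_root (RootOf cs) = True" | "is_root _ = False"

text \<open>Root computation trees: no square-root nodes (roots via RootOf, whose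
degree bound is the parameter D of computes).  Quadratic computation trees:
no RootOf nodes.\<close>
fun root_tree :: "ctree \<Rightarrow> bool" where
  "root_tree Stop = True"
| "root_tree (Comp i t) = (\<not> is_sqrt i \<and> root_tree t)"
| "root_tree (Dec a t1 t2) = (root_tree t1 \<and> root_tree t2)"

fun quad_tree :: "ctree \<Rightarrow> bool" where
  "quad_tree Stop = True"
| "quad_tree (Comp i t) = (\<not> is_root i \<and> quad_tree t)"
| "quad_tree (Dec a t1 t2) = (quad_tree t1 \<and> quad_tree t2)"

definition computable_root :: "nat \<Rightarrow> complex \<Rightarrow> bool" where
  "computable_root D z \<longleftrightarrow> (\<exists>t. root_tree t \<and> computes D [] t z)"

definition computable_quad :: "complex \<Rightarrow> bool" where
  "computable_quad z \<longleftrightarrow> (\<exists>t. quad_tree t \<and> computes 0 [] t z)"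

definition ext_degree :: "complex \<Rightarrow> nat" where
  "ext_degree z = (LEAST n. \<exists>p :: rat poly. p \<noteq> 0 \<and> degree p = n \<and>
                            poly (map_poly of_rat p) z = 0)"

end

theory Submission imports "HOL-Algebra.Finite_Extensions" Defs begin

definition CR :: "complex ring" where
  "CR = \<lparr>carrier = UNIV, monoid.mult = (\<lambda>x y. x * y), one = 1, ring.zero = 0, add = (\<lambda>x y. x + y)\<rparr>"

lemma CR_simps [simp]: "carrier CR = UNIV" "mult CR = (*)" "one CR = 1" "zero CR = 0" "add CR = (+)"
  by (auto simp: CR_def)

lemma field_CR: "field CR"
proof -
  have "\<exists>y. x + y = 0" for x :: complex
    using add.right_inverse by blast
  moreover have "x \<noteq> 0 \<Longrightarrow> \<exists>y. x * y = 1" for x :: complex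
    by (rule exI[of _ "inverse x"]) auto
  ultimately show "field CR"
    unfolding CR_def using add.right_inverse
    by unfold_locales (auto simp:algebra_simps Units_def)
qed

interpretation CR: cring CR using field_CR field.axioms(1) domain_def by blast
lemma domain_CR: "domain CR" using field_CR field.axioms(1) by blast

lemma CR_pow [simp]: "x [^]\<^bsub>CR\<^esub> (n::nat) = x ^ n"
  by (induction n) auto

lemma CR_neg [simp]: "\<ominus>\<^bsub>CR\<^esub> x = - x"
  by (metis CR.add.inv_equality CR_simps(1) CR_simps(4) CR_simps(5) UNIV_I add.right_inverse add.commute)

lemma CR_minus [simp]: "x \<ominus>\<^bsub>CR\<^esub> y = x - y"
  by (simp add: a_minus_def)

lemma CR_inv [simp]: "x \<noteq> 0 \<Longrightarrow> inv\<^bsub>CR\<^esub> x = inverse x"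
  by (metis CR.inv_char CR_simps UNIV_I mult.commute right_inverse)

lemma Rats_subfield: "subfield \<rat> CR"
proof (rule field.subfieldI'[OF field_CR])
  show "subring \<rat> CR"
    by (rule CR.subringI) (auto)
  show "\<And>k. k \<in> \<rat> - {\<zero>\<^bsub>CR\<^esub>} \<Longrightarrow> inv\<^bsub>CR\<^esub> k \<in> \<rat>" by auto
qed

lemma subfield_inverse:
  assumes "subfield K CR" "x \<in> K" shows "inverse x \<in> K"
proof (cases "x = 0")
  case True then show ?thesis using assms subfieldE(1) subringE(2) by fastforce
next
  case False
  then have "inv\<^bsub>CR\<^esub> x \<in> K" using assms
    using CR.subfield_m_inv(1)[OF assms(1), of x] by simp
  with False show ?thesis by simp
qed

lemma subfield_closed:
  assumes "subfield K CR"
  shows "x \<in> K \<Longrightarrow> y \<in> K \<Longrightarrow> x + y \<in> K" "x \<in> K \<Longrightarrow> y \<in> K \<Longrightarrow> x * y \<in> K"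
    "x \<in> K \<Longrightarrow> - x \<in> K" "x \<in> K \<Longrightarrow> y \<in> K \<Longrightarrow> x - y \<in> K" "x \<in> K \<Longrightarrow> y \<in> K \<Longrightarrow> x / y \<in> K"
    "of_int k \<in> K"
proof -
  have s: "subring K CR" using assms subfieldE(1) by blast
  have 1: "\<And>a b. a \<in> K \<Longrightarrow> b \<in> K \<Longrightarrow> a + b \<in> K" using subringE(7)[OF s] by simp
  have 2: "\<And>a b. a \<in> K \<Longrightarrow> b \<in> K \<Longrightarrow> a * b \<in> K" using subringE(6)[OF s] by simp
  have 3: "\<And>a. a \<in> K \<Longrightarrow> - a \<in> K" using subringE(5)[OF s] by simp
  show "x \<in> K \<Longrightarrow> y \<in> K \<Longrightarrow> x + y \<in> K" "x \<in> K \<Longrightarrow> y \<in> K \<Longrightarrow> x * y \<in> K" "x \<in> K \<Longrightarrow> - x \<in> K"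
    using 1 2 3 by auto
  show "x \<in> K \<Longrightarrow> y \<in> K \<Longrightarrow> x - y \<in> K" using 1[of x "- y"] 3[of y] by simp
  show "x \<in> K \<Longrightarrow> y \<in> K \<Longrightarrow> x / y \<in> K" using 2[of x "inverse y"] subfield_inverse[OF assms, of y]
    by (simp add: divide_inverse)
  have one: "1 \<in> K" using subringE(3)[OF s] by simp
  have zero: "0 \<in> K" using subringE(2)[OF s] by simp
  have nat: "of_nat n \<in> K" for n
    by (induction n) (use zero one subringE(7)[OF s] in auto)
  show "of_int k \<in> K"
  proof (cases "k \<ge> 0")
    case True then show ?thesis using nat[of "nat k"] by simp
  next
    case False
    then have "of_int k = - (of_nat (nat (-k)) :: complex)" by simp
    then show ?thesis using nat[of "nat (-k)"] 3 by metis
  qed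
qed


lemma lp_eval: "CR.eval (rev (coeffs q)) x = poly q x"
proof (induction q rule: pCons_induct)
  case 0 then show ?case by simp
next
  case (pCons a p)
  show ?case
  proof (cases "p = 0")
    case True
    with pCons have "a \<noteq> 0" by simp
    with True show ?thesis using CR.eval_append_aux[of "[]" a x] by simp
  next
    case False
    then have "coeffs (pCons a p) = a # coeffs p" by simp
    then show ?thesis using CR.eval_append_aux[of "rev (coeffs p)" a x] pCons by (simp add: algebra_simps)
  qed
qed


lemma lp_poly:
  assumes "\<And>i. Polynomial.coeff q i \<in> K"
  shows "polynomial\<^bsub>CR\<^esub> K (rev (coeffs q))"
proof (cases "q = 0")
  case True then show ?thesis by (simp add: polynomial_def)
next
  case False
  have "set (coeffs q) \<subseteq> K" using assms by (auto simp: coeffs_def)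
  moreover have "hd (rev (coeffs q)) \<noteq> 0" using False
    by (simp add: hd_rev last_coeffs_eq_coeff_degree)
  ultimately show ?thesis by (simp add: polynomial_def)
qed

lemma lp_length: "q \<noteq> 0 \<Longrightarrow> length (rev (coeffs q)) - 1 = Polynomial.degree q"
  by (simp add: length_coeffs)


lemma lp_back:
  assumes "polynomial\<^bsub>CR\<^esub> K p"
  shows "rev (coeffs (Poly (rev p))) = p"
proof (cases "p = []")
  case True then show ?thesis by simp
next
  case False
  then obtain a p' where p: "p = a # p'" by (cases p) auto
  then have "a \<noteq> 0" using assms by (simp add: polynomial_def)
  then show ?thesis by (simp add: coeffs_Poly p)
qed


lemma lp_back_coeff:
  assumes "polynomial\<^bsub>CR\<^esub> K p" "0 \<in> K"
  shows "Polynomial.coeff (Poly (rev p)) i \<in> K"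
proof -
  have "set p \<subseteq> K" using assms by (auto simp: polynomial_def)
  then have "set (rev p) \<subseteq> K" by simp
  then show ?thesis using assms(2) unfolding coeff_Poly_eq nth_default_def
    using nth_mem[of i "rev p"] by auto
qed

definition alg_in :: "complex set \<Rightarrow> nat \<Rightarrow> complex \<Rightarrow> bool" where
  "alg_in K d z \<longleftrightarrow> (\<exists>q. q \<noteq> 0 \<and> Polynomial.degree q \<le> d \<and> (\<forall>i. Polynomial.coeff q i \<in> K) \<and> poly q z = 0)"

lemma irr_bound:
  assumes K: "subfield K CR" and a: "alg_in K d z"
  shows "\<not> CR.transcendental K z" "length (CR.Irr K z) - 1 \<le> d"
proof -
  obtain q where q: "q \<noteq> 0" "Polynomial.degree q \<le> d" "\<And>i. Polynomial.coeff q i \<in> K" "poly q z = 0"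
    using a unfolding alg_in_def by blast
  define p where "p = rev (coeffs q)"
  have pc: "p \<in> carrier (univ_poly CR K)"
    using lp_poly[of q K] q(3) univ_poly_carrier unfolding p_def by blast
  have pne: "p \<noteq> []" using q(1) unfolding p_def by simp
  have pe: "CR.eval p z = \<zero>\<^bsub>CR\<^esub>" using lp_eval q(4) unfolding p_def by simp
  have alg: "(CR.algebraic over K) z"
    using CR.algebraicI[OF pc pne pe] .
  then show "\<not> CR.transcendental K z" by (simp add: over_def)
  have dv: "CR.Irr K z pdivides\<^bsub>CR\<^esub> p"
    using domain.Irr_minimal[OF domain_CR K _ alg pc pe] by simp
  have "length (CR.Irr K z) - 1 \<le> length p - 1"
    using domain.pdivides_imp_degree_le[OF domain_CR subfieldE(1)[OF K]
        domain.IrrE(1)[OF domain_CR K _ alg] pc pne] dv by simp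
  also have "\<dots> = Polynomial.degree q" using lp_length[OF q(1)] unfolding p_def .
  finally show "length (CR.Irr K z) - 1 \<le> d" using q(2) by simp
qed


lemma dim_pos:
  assumes E: "subfield E CR" and fd: "CR.finite_dimension \<rat> E"
  shows "CR.dim \<rat> E > 0"
proof (rule ccontr)
  assume "\<not> CR.dim \<rat> E > 0"
  then have "CR.dimension 0 \<rat> E" using CR.finite_dimensionE[OF Rats_subfield fd] by (simp add: over_def)
  then have "E = {0}" using CR.dimension_zero[OF Rats_subfield] by simp
  moreover have "1 \<in> E" using subringE(3)[OF subfieldE(1)[OF E]] by simp
  ultimately show False by simp
qed

definition good :: "nat \<Rightarrow> nat \<Rightarrow> bool" where
  "good d n \<longleftrightarrow> (\<forall>p::nat. prime p \<and> p dvd n \<longrightarrow> p \<le> d)"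

lemma good_mult:
  assumes "good d n" "m \<le> d" "n * m > 0" shows "good d (n * m)"
  unfolding good_def
proof (intro allI impI)
  fix p :: nat assume p: "prime p \<and> p dvd n * m"
  then have "p dvd n \<or> p dvd m" using prime_dvd_mult_nat by blast
  then show "p \<le> d"
  proof
    assume "p dvd n" then show ?thesis using assms(1) p unfolding good_def by blast
  next
    assume "p dvd m"
    moreover have "m > 0" using assms(3) by simp
    ultimately have "p \<le> m" by (simp add: dvd_imp_le)
    then show ?thesis using assms(2) by simp
  qed
qed

lemma ext_step:
  assumes K: "subfield K CR" and fd: "CR.finite_dimension \<rat> K" and g: "good d (CR.dim \<rat> K)"
    and a: "alg_in K d z"
  shows "subfield (CR.simple_extension K z) CR" "K \<subseteq> CR.simple_extension K z"
    "z \<in> CR.simple_extension K z" "CR.finite_dimension \<rat> (CR.simple_extension K z)"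
    "good d (CR.dim \<rat> (CR.simple_extension K z))"
proof -
  let ?E = "CR.simple_extension K z"
  have alg: "(CR.algebraic over K) z" using irr_bound(1)[OF K a] by (simp add: over_def)
  show E: "subfield ?E CR"
    using domain.simple_extension_is_subfield[OF domain_CR K _] alg by simp
  show "K \<subseteq> ?E" using CR.simple_extension_incl[of K z] subringE(1)[OF subfieldE(1)[OF K]] by simp
  show "z \<in> ?E" using CR.simple_extension_mem[OF subfieldE(1)[OF K]] by simp
  have fdE: "CR.finite_dimension K ?E"
    using domain.finite_dimension_simple_extension[OF domain_CR K _] alg by simp
  have dE: "CR.dim K ?E = length (CR.Irr K z) - 1"
    using domain.simple_extension_dim[OF domain_CR K _ alg] by (simp add: over_def)
  show fd2: "CR.finite_dimension \<rat> ?E"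
    using CR.telescopic_base_dim(1)[OF Rats_subfield K fd fdE] .
  have eq: "CR.dim \<rat> ?E = CR.dim \<rat> K * CR.dim K ?E"
    using CR.telescopic_base_dim(2)[OF Rats_subfield K fd fdE] by (simp add: over_def)
  have pos: "CR.dim \<rat> ?E > 0" using dim_pos[OF E fd2] .
  show "good d (CR.dim \<rat> ?E)"
    using good_mult[OF g, of "CR.dim K ?E"] dE irr_bound(2)[OF K a] pos eq by simp
qed


lemma alg_in_mem:
  assumes K: "subfield K CR" and x: "x \<in> K" and d: "1 \<le> d"
  shows "alg_in K d x"
  unfolding alg_in_def
proof (intro exI conjI allI)
  show "[:- x, 1:] \<noteq> 0" by simp
  show "Polynomial.degree [:- x, 1:] \<le> d" using d by simp
  show "poly [:- x, 1:] x = 0" by simp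
  fix i
  have "- x \<in> K" "1 \<in> K" "0 \<in> K" using subfield_closed(3)[OF K x] subfield_closed(6)[OF K, of 1]
      subfield_closed(6)[OF K, of 0] by auto
  then show "Polynomial.coeff [:- x, 1:] i \<in> K"
    by (cases i) (auto simp: coeff_pCons split: nat.splits)
qed

lemma alg_in_mono: "K \<subseteq> K' \<Longrightarrow> alg_in K d z \<Longrightarrow> alg_in K' d z"
  unfolding alg_in_def by blast

fun ins_ok :: "nat \<Rightarrow> nat \<Rightarrow> instr \<Rightarrow> bool" where
  "ins_ok d D i = ((\<not> is_sqrt i \<and> D \<le> d) \<or> (\<not> is_root i \<and> 2 \<le> d))"

fun tree_ok :: "nat \<Rightarrow> nat \<Rightarrow> ctree \<Rightarrow> bool" where
  "tree_ok d D Stop = True"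
| "tree_ok d D (Comp i t) = (ins_ok d D i \<and> tree_ok d D t)"
| "tree_ok d D (Dec a t1 t2) = (tree_ok d D t1 \<and> tree_ok d D t2)"

definition env_in :: "complex set \<Rightarrow> complex list \<Rightarrow> bool" where
  "env_in K env \<longleftrightarrow> (\<forall>x \<in> set env. x \<in> K \<and> cnj x \<in> K)"

lemma opnd_in:
  assumes K: "subfield K CR" and e: "env_in K env" and ok: "opnd_ok env a"
  shows "opnd_val env a \<in> K" "cnj (opnd_val env a) \<in> K"
proof -
  have "opnd_val env a \<in> K \<and> cnj (opnd_val env a) \<in> K"
  proof (cases a)
    case (Const k)
    then show ?thesis using subfield_closed(6)[OF K, of k] by simp
  next
    case (Val i)
    then have "i < length env" using ok by simp
    then have "env ! i \<in> set env" by simp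
    then show ?thesis using e Val unfolding env_in_def by simp
  qed
  then show "opnd_val env a \<in> K" "cnj (opnd_val env a) \<in> K" by auto
qed

lemma instr_alg:
  assumes r: "instr_res D env ins z" and K: "subfield K CR" and e: "env_in K env"
    and ok: "ins_ok d D ins" and d: "1 \<le> d"
  shows "alg_in K d z \<and> alg_in K d (cnj z)"
  using r
proof cases
  case (add a b)
  then show ?thesis using opnd_in[OF K e] subfield_closed(1)[OF K] alg_in_mem[OF K _ d] by simp
next
  case (sub a b)
  then show ?thesis using opnd_in[OF K e] subfield_closed(4)[OF K] alg_in_mem[OF K _ d] by simp
next
  case (mul a b)
  then show ?thesis using opnd_in[OF K e] subfield_closed(2)[OF K] alg_in_mem[OF K _ d] by simp
next
  case (quot a b)
  then show ?thesis using opnd_in[OF K e] subfield_closed(5)[OF K] alg_in_mem[OF K _ d] by simp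
next
  case (conj a)
  then show ?thesis using opnd_in[OF K e] alg_in_mem[OF K _ d] by simp
next
  case (root cs)
  define q where "q = Poly (map (opnd_val env) cs)"
  have dq: "Polynomial.degree q \<le> d" using root ok unfolding q_def by auto
  have cq: "Polynomial.coeff q i \<in> K \<and> cnj (Polynomial.coeff q i) \<in> K" for i
  proof -
    have "\<forall>c \<in> set cs. opnd_ok env c" using root(2) by (simp add: list_all_iff)
    then have "\<forall>x\<in>set (map (opnd_val env) cs). x \<in> K \<and> cnj x \<in> K" using opnd_in[OF K e] by auto
    moreover have "0 \<in> K" using subfield_closed(6)[OF K, of 0] by simp
    ultimately show ?thesis unfolding q_def coeff_Poly_eq nth_default_def
      using nth_mem[of i "map (opnd_val env) cs"] by auto
  qed
  have "alg_in K d z" unfolding alg_in_def using root dq cq unfolding q_def by blast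
  moreover have "alg_in K d (cnj z)"
    unfolding alg_in_def
  proof (intro exI conjI allI)
    have cm: "\<And>i. Polynomial.coeff (map_poly cnj q) i = cnj (Polynomial.coeff q i)"
      by (simp add: coeff_map_poly)
    show "map_poly cnj q \<noteq> 0"
    proof
      assume "map_poly cnj q = 0"
      then have "Polynomial.coeff q i = 0" for i using cm[of i] by (metis complex_cnj_zero_iff coeff_0)
      then have "q = 0" by (simp add: poly_eq_iff)
      then show False using root unfolding q_def by simp
    qed
    show "Polynomial.degree (map_poly cnj q) \<le> d" using dq degree_map_poly[of cnj q] by simp
    show "poly (map_poly cnj q) (cnj z) = 0" using root poly_map_poly_cnj unfolding q_def by simp
    fix i show "Polynomial.coeff (map_poly cnj q) i \<in> K"
      using cq[of i] cm[of i] by simp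
  qed
  ultimately show ?thesis by simp
next
  case (sqrt a)
  define c where "c = opnd_val env a"
  have cK: "c \<in> K" "cnj c \<in> K" using opnd_in[OF K e sqrt(2)] unfolding c_def by auto
  have d2: "2 \<le> d" using ok sqrt by simp
  have gen: "alg_in K d w" if "w ^ 2 = b" "b \<in> K" for w b
    unfolding alg_in_def
  proof (intro exI conjI allI)
    show "[:- b, 0, 1:] \<noteq> 0" by simp
    show "Polynomial.degree [:- b, 0, 1:] \<le> d" using d2 by simp
    show "poly [:- b, 0, 1:] w = 0" using that by (simp add: power2_eq_square)
    fix i
    have "- b \<in> K" "1 \<in> K" "0 \<in> K" using subfield_closed(3)[OF K that(2)] subfield_closed(6)[OF K, of 1]
        subfield_closed(6)[OF K, of 0] by auto
    then show "Polynomial.coeff [:- b, 0, 1:] i \<in> K"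
      by (cases i) (auto simp: coeff_pCons split: nat.splits)
  qed
  have "z ^ 2 = c" using sqrt unfolding c_def by simp
  moreover have "cnj z ^ 2 = cnj c" using sqrt unfolding c_def by (metis complex_cnj_power)
  ultimately show ?thesis using gen cK by blast
qed


lemma computes_field:
  assumes "computes D env t w"
  shows "tree_ok d D t \<Longrightarrow> 1 \<le> d \<Longrightarrow> subfield K CR \<Longrightarrow> CR.finite_dimension \<rat> K \<Longrightarrow>
    good d (CR.dim \<rat> K) \<Longrightarrow> env_in K env \<Longrightarrow>
    \<exists>K'. subfield K' CR \<and> CR.finite_dimension \<rat> K' \<and> good d (CR.dim \<rat> K') \<and> w \<in> K'"
  using assms
proof (induction arbitrary: K rule: computes.induct)
  case (here D env ins z t)
  have "alg_in K d z" using instr_alg[OF here(1) here(4) here(7)] here(2,3) by simp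
  then show ?case using ext_step[OF here(4,5,6)] by blast
next
  case (below D env ins z t w)
  have ins: "ins_ok d D ins" and tt: "tree_ok d D t" using below(4) by auto
  have a: "alg_in K d z \<and> alg_in K d (cnj z)" using instr_alg[OF below(1) below(6) below(9) ins below(5)] .
  let ?K1 = "CR.simple_extension K z"
  note s1 = ext_step[OF below(6,7,8) conjunct1[OF a]]
  have a1: "alg_in ?K1 d (cnj z)" using alg_in_mono[OF s1(2)] a by (simp add: s1)
  let ?K2 = "CR.simple_extension ?K1 (cnj z)"
  note s2 = ext_step[OF s1(1) s1(4) s1(5) a1] s1
  have "env_in ?K2 (env @ [z])"
    using below(9) s2 a unfolding env_in_def by auto
  then show ?case using below.IH[OF tt below(5) s2(1) s2(4) s2(5)] by blast
next
  case (dec_yes env a t1 D w t2)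
  then show ?case by auto
next
  case (dec_no env a t2 D w t1)
  then show ?case by auto
qed


lemma Rats_sub: assumes F: "subfield F CR" shows "\<rat> \<subseteq> F"
proof
  fix x :: complex assume "x \<in> \<rat>"
  then obtain a b where "x = of_int a / of_int b" by (rule Rats_cases')
  then show "x \<in> F" using subfield_closed(5)[OF F subfield_closed(6)[OF F] subfield_closed(6)[OF F]] by simp
qed

lemma Span_mono_field:
  assumes "K \<subseteq> F" shows "CR.Span K Us \<subseteq> CR.Span F Us"
proof (induction Us)
  case Nil then show ?case by simp
next
  case (Cons u Us)
  have "CR.line_extension K u (CR.Span K Us) \<subseteq> CR.line_extension F u (CR.Span F Us)"
  proof
    fix x assume "x \<in> CR.line_extension K u (CR.Span K Us)"
    then obtain k v where "k \<in> K" "v \<in> CR.Span K Us" "x = k * u + v"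
      unfolding CR.line_extension_mem_iff by auto
    then show "x \<in> CR.line_extension F u (CR.Span F Us)"
      unfolding CR.line_extension_mem_iff using Cons assms by auto
  qed
  then show ?case by simp
qed

lemma fd_over:
  assumes F: "subfield F CR" and K: "subfield K CR" and FK: "F \<subseteq> K"
    and fd: "CR.finite_dimension \<rat> K"
  shows "CR.finite_dimension F K"
proof -
  obtain Us where Us: "set Us \<subseteq> carrier CR" "CR.Span \<rat> Us = K"
    using CR.exists_base[OF Rats_subfield CR.finite_dimensionE[OF Rats_subfield fd]] by (auto simp: over_def)
  have sub: "subalgebra F K CR"
  proof (rule subalgebra.intro)
    show "subgroup K (add_monoid CR)" using subring.axioms(1)[OF subfieldE(1)[OF K]] .
    show "subalgebra_axioms F K CR"
    proof
      fix k v assume "k \<in> F" "v \<in> K"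
      then show "k \<otimes>\<^bsub>CR\<^esub> v \<in> K" using FK subfield_closed(2)[OF K, of k v] by auto
    qed
  qed
  have inc: "set Us \<subseteq> K" using CR.Span_base_incl[OF Rats_subfield Us(1)] Us(2) by simp
  have "CR.Span F Us \<subseteq> K" using CR.subalgebra_Span_incl[OF F sub inc] .
  moreover have "K \<subseteq> CR.Span F Us" using Span_mono_field[OF Rats_sub[OF F], of Us] Us(2) by simp
  ultimately have "CR.Span F Us = K" by blast
  then show ?thesis using CR.Span_finite_dimension[OF F Us(1)] by simp
qed

definition to_rat :: "complex \<Rightarrow> rat" where "to_rat c = (THE y. of_rat y = c)"

lemma to_rat: "c \<in> \<rat> \<Longrightarrow> of_rat (to_rat c) = c"
  unfolding to_rat_def by (rule theI') (auto elim: Rats_cases)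

lemma to_rat0: "to_rat 0 = 0"
  using to_rat[of 0] by simp

lemma ext_degree_Irr:
  assumes alg: "(CR.algebraic over \<rat>) \<alpha>"
  shows "ext_degree \<alpha> = length (CR.Irr \<rat> \<alpha>) - 1" "algebraic \<alpha>"
proof -
  let ?I = "CR.Irr \<rat> \<alpha>"
  have Ic: "?I \<in> carrier (univ_poly CR \<rat>)" using domain.IrrE(1)[OF domain_CR Rats_subfield _ alg] by simp
  have Ip: "polynomial\<^bsub>CR\<^esub> \<rat> ?I" using Ic univ_poly_carrier by blast
  have Ine: "?I \<noteq> []" using domain.pirreducibleE(1)[OF domain_CR subfieldE(1)[OF Rats_subfield] Ic
      domain.IrrE(2)[OF domain_CR Rats_subfield _ alg]] by simp
  have Iev: "CR.eval ?I \<alpha> = 0" using domain.IrrE(4)[OF domain_CR Rats_subfield _ alg] by simp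
  define q where "q = Poly (rev ?I)"
  have qI: "rev (coeffs q) = ?I" using lp_back[OF Ip] unfolding q_def .
  have qne: "q \<noteq> 0" using qI Ine by auto
  have qc: "Polynomial.coeff q i \<in> \<rat>" for i using lp_back_coeff[OF Ip] unfolding q_def by simp
  have qr: "poly q \<alpha> = 0" using lp_eval[of q \<alpha>] qI Iev by simp
  have qd: "Polynomial.degree q = length ?I - 1" using lp_length[OF qne] qI by simp
  show "algebraic \<alpha>" unfolding algebraic_altdef using qc qne qr by blast
  define r where "r = map_poly to_rat q"
  have rq: "map_poly of_rat r = q"
    by (rule poly_eqI) (simp add: r_def coeff_map_poly to_rat0 to_rat[OF qc])
  have rd: "Polynomial.degree r = Polynomial.degree q"
    using rq degree_map_poly[of "of_rat :: rat \<Rightarrow> complex" r] by simp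
  have rne: "r \<noteq> 0" using rq qne by auto
  have ex: "\<exists>p :: rat poly. p \<noteq> 0 \<and> Polynomial.degree p = Polynomial.degree q \<and> poly (map_poly of_rat p) \<alpha> = 0"
    using rne rd rq qr by blast
  have le1: "ext_degree \<alpha> \<le> Polynomial.degree q"
    unfolding ext_degree_def by (rule Least_le) (use ex in blast)
  have "\<exists>p :: rat poly. p \<noteq> 0 \<and> Polynomial.degree p = ext_degree \<alpha> \<and> poly (map_poly of_rat p) \<alpha> = 0"
    unfolding ext_degree_def by (rule LeastI_ex) (rule exI, rule ex)
  then obtain p :: "rat poly" where p: "p \<noteq> 0" "Polynomial.degree p = ext_degree \<alpha>" "poly (map_poly of_rat p) \<alpha> = 0"
    by blast
  have "alg_in \<rat> (ext_degree \<alpha>) \<alpha>"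
    unfolding alg_in_def
  proof (intro exI[of _ "map_poly of_rat p"] conjI allI)
    show "map_poly (of_rat :: rat \<Rightarrow> complex) p \<noteq> 0"
    proof
      assume "map_poly (of_rat :: rat \<Rightarrow> complex) p = 0"
      then have "Polynomial.coeff (map_poly (of_rat :: rat \<Rightarrow> complex) p) (Polynomial.degree p) = 0" by simp
      moreover have "Polynomial.coeff (map_poly (of_rat :: rat \<Rightarrow> complex) p) (Polynomial.degree p) = of_rat (Polynomial.lead_coeff p)"
        by (simp add: coeff_map_poly)
      ultimately show False using p(1) by simp
    qed
    show "Polynomial.degree (map_poly (of_rat :: rat \<Rightarrow> complex) p) \<le> ext_degree \<alpha>"
      using p(2) degree_map_poly[of "of_rat :: rat \<Rightarrow> complex" p] by simp
    show "poly (map_poly (of_rat :: rat \<Rightarrow> complex) p) \<alpha> = 0" using p(3) .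
    fix i show "Polynomial.coeff (map_poly (of_rat :: rat \<Rightarrow> complex) p) i \<in> \<rat>"
      by (simp add: coeff_map_poly)
  qed
  then have "length ?I - 1 \<le> ext_degree \<alpha>" using irr_bound(2)[OF Rats_subfield] by blast
  then show "ext_degree \<alpha> = length ?I - 1" using le1 qd by simp
qed


lemma final_step:
  assumes K: "subfield K CR" and fd: "CR.finite_dimension \<rat> K" and g: "good d (CR.dim \<rat> K)"
    and aK: "\<alpha> \<in> K"
  shows "algebraic \<alpha>" "good d (ext_degree \<alpha>)" "ext_degree \<alpha> > 0"
proof -
  have alg: "(CR.algebraic over \<rat>) \<alpha>"
    using CR.finite_dimension_imp_algebraic[OF Rats_subfield subfieldE(1)[OF K] fd aK] .
  show "algebraic \<alpha>" using ext_degree_Irr(2)[OF alg] .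
  let ?F = "CR.simple_extension \<rat> \<alpha>"
  have subF: "subfield ?F CR"
    using domain.simple_extension_is_subfield[OF domain_CR Rats_subfield _] alg by simp
  have FK: "?F \<subseteq> K"
    using CR.simple_extension_subring_incl[OF subfieldE(1)[OF K] Rats_sub[OF K] aK] .
  have fdF: "CR.finite_dimension \<rat> ?F"
    using domain.finite_dimension_simple_extension[OF domain_CR Rats_subfield _] alg by simp
  have dF: "CR.dim \<rat> ?F = ext_degree \<alpha>"
    using domain.simple_extension_dim[OF domain_CR Rats_subfield _ alg] ext_degree_Irr(1)[OF alg]
    by (simp add: over_def)
  have fdFK: "CR.finite_dimension ?F K" using fd_over[OF subF K FK fd] .
  have eq: "CR.dim \<rat> K = CR.dim \<rat> ?F * CR.dim ?F K"
    using CR.telescopic_base_dim(2)[OF Rats_subfield subF fdF fdFK] by (simp add: over_def)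
  have pos: "CR.dim \<rat> K > 0" using dim_pos[OF K fd] .
  have dv: "ext_degree \<alpha> dvd CR.dim \<rat> K" using eq dF by simp
  show "ext_degree \<alpha> > 0" using dv pos by (cases "ext_degree \<alpha> = 0") auto
  show "good d (ext_degree \<alpha>)" unfolding good_def
  proof (intro allI impI)
    fix p :: nat assume p: "prime p \<and> p dvd ext_degree \<alpha>"
    then have "p dvd CR.dim \<rat> K" using dv dvd_trans by blast
    then show "p \<le> d" using g p unfolding good_def by blast
  qed
qed

lemma good2_pow:
  fixes n :: nat
  assumes "good 2 n" "n > 0" shows "\<exists>k. n = 2 ^ k"
  using assms
proof (induction n rule: less_induct)
  case (less n)
  show ?case
  proof (cases "n = 1")
    case True then show ?thesis by (intro exI[of _ 0]) simp
  next
    case False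
    then obtain p :: nat where p: "prime p" "p dvd n" using prime_factor_nat by blast
    then have "p \<le> 2" using less.prems(1) unfolding good_def by blast
    moreover have "p \<ge> 2" using p(1) prime_ge_2_nat by blast
    ultimately have "p = 2" by simp
    with p obtain m where m: "n = 2 * m" by blast
    have "m > 0" "m < n" using m less.prems(2) by auto
    moreover have "good 2 m" using less.prems(1) m unfolding good_def by auto
    ultimately obtain k where "m = 2 ^ k" using less.IH by blast
    then show ?thesis using m by (intro exI[of _ "Suc k"]) simp
  qed
qed

lemma root_tree_ok: "root_tree t \<Longrightarrow> tree_ok D D t"
  by (induction t) auto

lemma quad_tree_ok: "quad_tree t \<Longrightarrow> tree_ok 2 0 t"
  by (induction t) auto

lemma base_field: "CR.finite_dimension \<rat> \<rat>" "good d (CR.dim \<rat> \<rat>)"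
proof -
  have "CR.dimension 1 \<rat> \<rat>" using CR.dimension_one[OF Rats_subfield] .
  then show "CR.finite_dimension \<rat> \<rat>" using CR.finite_dimensionI by blast
  have "CR.dim \<rat> \<rat> = 1" using CR.dimI[OF Rats_subfield \<open>CR.dimension 1 \<rat> \<rat>\<close>] by (simp add: over_def)
  then show "good d (CR.dim \<rat> \<rat>)" unfolding good_def by auto
qed

theorem lemma5:
  fixes D :: nat and \<alpha> :: complex
  assumes "D \<ge> 1"
  shows "(computable_root D \<alpha> \<longrightarrow>
            algebraic \<alpha> \<and> (\<forall>p. prime p \<and> p dvd ext_degree \<alpha> \<longrightarrow> p \<le> D))
       \<and> (computable_quad \<alpha> \<longrightarrow> algebraic \<alpha> \<and> (\<exists>k. ext_degree \<alpha> = 2 ^ k))"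
proof -
  have e: "env_in \<rat> []" by (simp add: env_in_def)
  have A: "algebraic \<alpha> \<and> (\<forall>p. prime p \<and> p dvd ext_degree \<alpha> \<longrightarrow> p \<le> D)"
    if r: "computable_root D \<alpha>"
  proof -
    obtain t where t: "root_tree t" "computes D [] t \<alpha>" using r unfolding computable_root_def by blast
    obtain K where K: "subfield K CR" "CR.finite_dimension \<rat> K" "good D (CR.dim \<rat> K)" "\<alpha> \<in> K"
      using computes_field[OF t(2) root_tree_ok[OF t(1)] assms Rats_subfield base_field e] by blast
    show ?thesis using final_step(1,2)[OF K] unfolding good_def by blast
  qed
  have B: "algebraic \<alpha> \<and> (\<exists>k. ext_degree \<alpha> = 2 ^ k)" if r: "computable_quad \<alpha>"
  proof -
    obtain t where t: "quad_tree t" "computes 0 [] t \<alpha>" using r unfolding computable_quad_def by blast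
    obtain K where K: "subfield K CR" "CR.finite_dimension \<rat> K" "good 2 (CR.dim \<rat> K)" "\<alpha> \<in> K"
      using computes_field[OF t(2) quad_tree_ok[OF t(1)] one_le_numeral Rats_subfield base_field(1) base_field(2)[of 2] e] by blast
    show ?thesis using final_step[OF K] good2_pow[of "ext_degree \<alpha>"] by simp
  qed
  show ?thesis using A B by blast
qed

end
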